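(* Let $\mathcal{D}[t]\subset\mathcal{H}\subset\mathcal{D}^\times[t^\times]$ be a rigged Hilbert space with $\mathcal{D}[t]$ complete and reflexive. A sequence $\{\zeta_n\}$ of elements of $\mathcal{D}^\times$ is Bessel-like if and only if $\sum_{k=1}^\infty|\langle\zeta_k,\eta\rangle|^2<\infty$ for every $\eta\in\mathcal{D}$ and the analysis operator $$F:\eta\in\mathcal{D}[t]\mapsto\{\overline{\langle\zeta_k,\eta\rangle}\}\in\ell^2[\|\cdot\|_2]$$ is continuous.
   Context: A rigged Hilbert space $\mathcal{D}[t]\subset\mathcal{H}\subset\mathcal{D}^\times[t^\times]$: $\mathcal{D}$ is a dense subspace of the Hilbert space $\mathcal{H}$ with a locally convex topology $t$ finer than the norm topology, $\mathcal{D}^\times$ is the space of continuous conjugate-linear functionals on $\mathcal{D}[t]$ with the strong dual topology $t^\times=\beta(\mathcal{D}^\times,\mathcal{D})$, $\mathcal{H}\subset\mathcal{D}^\times$, and the duality form $\langle\Phi,\eta\rangle$ (value of $\Phi\in\mathcal{D}^\times$ at $\eta\in\mathcal{D}$) extends the inner product. A sequence $\{\zeta_n\}\subset\mathcal{D}^\times$ is Bessel-like if for every bounded subset $\mathcal{M}$ of $\mathcal{D}[t]$, $\sup_{\eta\in\mathcal{M}}\sum_{k=1}^\infty|\langle\zeta_k,\eta\rangle|^2<\infty$. *)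

theory Defs
  imports "HOL-Analysis.Analysis" "HOL-Library.Function_Algebras"
begin

text \<open>A locally convex topology on a (sub)space X is described by a family Q of
  seminorms; the basic neighbourhoods of x are {y in X. p (y - x) < delta for p in S}
  with S a finite subfamily of Q.\<close>

definition seminorm_on :: "'b::ab_group_add set \<Rightarrow> (complex \<Rightarrow> 'b \<Rightarrow> 'b) \<Rightarrow> ('b \<Rightarrow> real) \<Rightarrow> bool" where
  "seminorm_on X sc p \<longleftrightarrow>
     (\<forall>x\<in>X. 0 \<le> p x) \<and>
     (\<forall>x\<in>X. \<forall>c. p (sc c x) = cmod c * p x) \<and>
     (\<forall>x\<in>X. \<forall>y\<in>X. p (x + y) \<le> p x + p y)"

definition lcs_open :: "'b::ab_group_add set \<Rightarrow> ('b \<Rightarrow> real) set \<Rightarrow> 'b set \<Rightarrow> bool" where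
  "lcs_open X Q U \<longleftrightarrow> U \<subseteq> X \<and>
     (\<forall>x\<in>U. \<exists>S \<delta>. finite S \<and> S \<subseteq> Q \<and> 0 < \<delta> \<and> {y\<in>X. \<forall>p\<in>S. p (y - x) < \<delta>} \<subseteq> U)"

definition lcs_bounded :: "'b::ab_group_add set \<Rightarrow> ('b \<Rightarrow> real) set \<Rightarrow> 'b set \<Rightarrow> bool" where
  "lcs_bounded X Q M \<longleftrightarrow> M \<subseteq> X \<and> (\<forall>p\<in>Q. bdd_above (p ` M))"

definition lcs_continuous_into ::
  "'b::ab_group_add set \<Rightarrow> ('b \<Rightarrow> real) set \<Rightarrow> ('c \<Rightarrow> 'c \<Rightarrow> real) \<Rightarrow> ('b \<Rightarrow> 'c) \<Rightarrow> bool" where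
  "lcs_continuous_into X Q d g \<longleftrightarrow>
     (\<forall>x\<in>X. \<forall>\<epsilon>>0. \<exists>S \<delta>. finite S \<and> S \<subseteq> Q \<and> 0 < \<delta> \<and>
        (\<forall>y\<in>X. (\<forall>p\<in>S. p (y - x) < \<delta>) \<longrightarrow> d (g y) (g x) < \<epsilon>))"

definition lcs_complete :: "'b::ab_group_add set \<Rightarrow> ('b \<Rightarrow> real) set \<Rightarrow> bool" where
  "lcs_complete X Q \<longleftrightarrow>
     (\<forall>F. F \<noteq> bot \<and> eventually (\<lambda>x. x \<in> X) F \<and>
          (\<forall>p\<in>Q. \<forall>e>0. \<exists>A. eventually (\<lambda>x. x \<in> A) F \<and> (\<forall>x\<in>A. \<forall>y\<in>A. p (x - y) < e))
        \<longrightarrow> (\<exists>x\<in>X. \<forall>p\<in>Q. \<forall>e>0. eventually (\<lambda>y. p (y - x) < e) F))"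

definition sup_over :: "'b set \<Rightarrow> ('b \<Rightarrow> real) \<Rightarrow> real" where
  "sup_over M g = Sup (insert 0 (g ` M))"

definition conj_linear_on :: "(complex \<Rightarrow> 'a \<Rightarrow> 'a) \<Rightarrow> 'a::ab_group_add set \<Rightarrow> ('a \<Rightarrow> complex) \<Rightarrow> bool" where
  "conj_linear_on sc D f \<longleftrightarrow>
     (\<forall>x\<in>D. \<forall>y\<in>D. f (x + y) = f x + f y) \<and> (\<forall>x\<in>D. \<forall>c. f (sc c x) = cnj c * f x)"

text \<open>The space D^x of continuous conjugate-linear functionals on D[t]
  (represented as functions vanishing outside D).\<close>
definition lcs_dual :: "(complex \<Rightarrow> 'a \<Rightarrow> 'a) \<Rightarrow> 'a::ab_group_add set \<Rightarrow> ('a \<Rightarrow> real) set \<Rightarrow> ('a \<Rightarrow> complex) set" where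
  "lcs_dual sc D P = {f. conj_linear_on sc D f \<and> lcs_continuous_into D P dist f \<and> (\<forall>x. x \<notin> D \<longrightarrow> f x = 0)}"

text \<open>Seminorms of the strong dual topology beta(D^x, D): sup over bounded subsets of D.\<close>
definition strong_seminorms :: "'a::ab_group_add set \<Rightarrow> ('a \<Rightarrow> real) set \<Rightarrow> (('a \<Rightarrow> complex) \<Rightarrow> real) set" where
  "strong_seminorms D P = {(\<lambda>f. sup_over M (\<lambda>x. cmod (f x))) | M. lcs_bounded D P M}"

definition lcs_bidual :: "(complex \<Rightarrow> 'a \<Rightarrow> 'a) \<Rightarrow> 'a::ab_group_add set \<Rightarrow> ('a \<Rightarrow> real) set \<Rightarrow> (('a \<Rightarrow> complex) \<Rightarrow> complex) set" where
  "lcs_bidual sc D P = {\<Phi>.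
     (\<forall>f\<in>lcs_dual sc D P. \<forall>g\<in>lcs_dual sc D P. \<Phi> (f + g) = \<Phi> f + \<Phi> g) \<and>
     (\<forall>f\<in>lcs_dual sc D P. \<forall>c. \<Phi> (\<lambda>x. c * f x) = cnj c * \<Phi> f) \<and>
     lcs_continuous_into (lcs_dual sc D P) (strong_seminorms D P) dist \<Phi>}"

text \<open>Seminorms on D of the topology induced by the canonical embedding into the
  strong bidual beta(D^xx, D^x): sup over strongly bounded subsets of D^x.\<close>
definition bidual_seminorms :: "(complex \<Rightarrow> 'a \<Rightarrow> 'a) \<Rightarrow> 'a::ab_group_add set \<Rightarrow> ('a \<Rightarrow> real) set \<Rightarrow> ('a \<Rightarrow> real) set" where
  "bidual_seminorms sc D P = {(\<lambda>x. sup_over B (\<lambda>f. cmod (f x))) | B.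
      lcs_bounded (lcs_dual sc D P) (strong_seminorms D P) B}"

text \<open>Reflexive: the canonical embedding eta |-> (Phi |-> conj <Phi, eta>) of D into D^xx
  is onto and is a homeomorphism of D[t] onto D^xx with the strong topology.\<close>
definition lcs_reflexive :: "(complex \<Rightarrow> 'a \<Rightarrow> 'a) \<Rightarrow> 'a::ab_group_add set \<Rightarrow> ('a \<Rightarrow> real) set \<Rightarrow> bool" where
  "lcs_reflexive sc D P \<longleftrightarrow>
     (\<forall>\<Phi>\<in>lcs_bidual sc D P. \<exists>x\<in>D. \<forall>f\<in>lcs_dual sc D P. \<Phi> f = cnj (f x)) \<and>
     (\<forall>U. lcs_open D P U \<longleftrightarrow> lcs_open D (bidual_seminorms sc D P) U)"

definition hnorm :: "('a \<Rightarrow> 'a \<Rightarrow> complex) \<Rightarrow> 'a \<Rightarrow> real" where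
  "hnorm ip x = sqrt (Re (ip x x))"

text \<open>The Hilbert space H is the whole type 'a, a complex vector space with scalar
  multiplication sc and inner product ip (linear in the first, conjugate-linear in the
  second argument), complete for the induced norm.
  The embedding H into D^x is h |-> (eta |-> ip h eta), which is automatically
  continuous and injective under these assumptions.\<close>
definition rigged_hilbert_space ::
  "(complex \<Rightarrow> 'a::ab_group_add \<Rightarrow> 'a) \<Rightarrow> ('a \<Rightarrow> 'a \<Rightarrow> complex) \<Rightarrow> 'a set \<Rightarrow> ('a \<Rightarrow> real) set \<Rightarrow> bool" where
  "rigged_hilbert_space sc ip D P \<longleftrightarrow>
     vector_space sc \<and>
     (\<forall>x y z. ip (x + y) z = ip x z + ip y z) \<and>
     (\<forall>c x y. ip (sc c x) y = c * ip x y) \<and>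
     (\<forall>x y. ip y x = cnj (ip x y)) \<and>
     (\<forall>x. 0 \<le> Re (ip x x)) \<and>
     (\<forall>x. ip x x = 0 \<longrightarrow> x = 0) \<and>
     (\<forall>X::nat \<Rightarrow> 'a. (\<forall>e>0. \<exists>N. \<forall>m\<ge>N. \<forall>n\<ge>N. hnorm ip (X m - X n) < e) \<longrightarrow>
         (\<exists>l. (\<lambda>n. hnorm ip (X n - l)) \<longlonglongrightarrow> 0)) \<and>
     module.subspace sc D \<and>
     (\<forall>h. \<forall>e>0. \<exists>x\<in>D. hnorm ip (h - x) < e) \<and>
     (\<forall>p\<in>P. seminorm_on D sc p) \<and>
     lcs_continuous_into D P (\<lambda>a b. hnorm ip (a - b)) id"

definition bessel_like :: "'a::ab_group_add set \<Rightarrow> ('a \<Rightarrow> real) set \<Rightarrow> (nat \<Rightarrow> 'a \<Rightarrow> complex) \<Rightarrow> bool" where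
  "bessel_like D P \<zeta> \<longleftrightarrow>
     (\<forall>M. lcs_bounded D P M \<longrightarrow>
        (\<exists>B. \<forall>\<eta>\<in>M. summable (\<lambda>k. (cmod (\<zeta> k \<eta>))\<^sup>2) \<and> (\<Sum>k. (cmod (\<zeta> k \<eta>))\<^sup>2) \<le> B))"

definition l2_dist :: "(nat \<Rightarrow> complex) \<Rightarrow> (nat \<Rightarrow> complex) \<Rightarrow> real" where
  "l2_dist a b = sqrt (\<Sum>k. (cmod (a k - b k))\<^sup>2)"

end

theory Submission
  imports Defs
begin

lemma cont_add:
  assumes "lcs_continuous_into D P dist f" "lcs_continuous_into D P dist g"
  shows "lcs_continuous_into D P dist (\<lambda>x. f x + g x :: complex)"
  unfolding lcs_continuous_into_def
proof (intro ballI allI impI)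
  fix x e assume x: "x \<in> D" and e: "(0::real) < e"
  obtain S1 d1 where 1: "finite S1" "S1 \<subseteq> P" "0 < d1" "\<forall>y\<in>D. (\<forall>p\<in>S1. p (y - x) < d1) \<longrightarrow> dist (f y) (f x) < e/2"
    using assms(1)[unfolded lcs_continuous_into_def, rule_format, OF x half_gt_zero[OF e]] by (elim exE conjE) (rule that)
  obtain S2 d2 where 2: "finite S2" "S2 \<subseteq> P" "0 < d2" "\<forall>y\<in>D. (\<forall>p\<in>S2. p (y - x) < d2) \<longrightarrow> dist (g y) (g x) < e/2"
    using assms(2)[unfolded lcs_continuous_into_def, rule_format, OF x half_gt_zero[OF e]] by (elim exE conjE) (rule that)
  show "\<exists>S \<delta>. finite S \<and> S \<subseteq> P \<and> 0 < \<delta> \<and> (\<forall>y\<in>D. (\<forall>p\<in>S. p (y - x) < \<delta>) \<longrightarrow> dist (f y + g y) (f x + g x) < e)"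
  proof (intro exI conjI ballI impI)
    show "finite (S1 \<union> S2)" "S1 \<union> S2 \<subseteq> P" "0 < min d1 d2" using 1 2 by auto
    fix y assume y: "y \<in> D" "\<forall>p\<in>S1 \<union> S2. p (y - x) < min d1 d2"
    have "dist (f y) (f x) < e/2" "dist (g y) (g x) < e/2" using 1(4) 2(4) y by auto
    moreover have "dist (f y + g y) (f x + g x) \<le> dist (f y) (f x) + dist (g y) (g x)"
      unfolding dist_norm by (metis add_diff_add norm_triangle_ineq)
    ultimately show "dist (f y + g y) (f x + g x) < e" by linarith
  qed
qed

lemma cont_scale:
  assumes "lcs_continuous_into D P dist f"
  shows "lcs_continuous_into D P dist (\<lambda>x. c * f x :: complex)"
  unfolding lcs_continuous_into_def
proof (intro ballI allI impI)
  fix x e assume x: "x \<in> D" and e: "(0::real) < e"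
  have ec: "0 < e / (cmod c + 1)" using e by (simp add: add_nonneg_pos)
  obtain S d where 1: "finite S" "S \<subseteq> P" "0 < d" "\<forall>y\<in>D. (\<forall>p\<in>S. p (y - x) < d) \<longrightarrow> dist (f y) (f x) < e / (cmod c + 1)"
    using assms[unfolded lcs_continuous_into_def, rule_format, OF x ec] by (elim exE conjE) (rule that)
  show "\<exists>S \<delta>. finite S \<and> S \<subseteq> P \<and> 0 < \<delta> \<and> (\<forall>y\<in>D. (\<forall>p\<in>S. p (y - x) < \<delta>) \<longrightarrow> dist (c * f y) (c * f x) < e)"
  proof (intro exI conjI ballI impI)
    show "finite S" "S \<subseteq> P" "0 < d" using 1 by auto
    fix y assume y: "y \<in> D" "\<forall>p\<in>S. p (y - x) < d"
    have h: "dist (f y) (f x) < e / (cmod c + 1)" using 1(4) y by auto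
    have "dist (c * f y) (c * f x) = cmod c * dist (f y) (f x)"
      by (simp add: dist_norm right_diff_distrib[symmetric] norm_mult)
    also have "\<dots> \<le> (cmod c + 1) * dist (f y) (f x)" by (simp add: mult_right_mono)
    also have "\<dots> < (cmod c + 1) * (e / (cmod c + 1))"
      using h by (intro mult_strict_left_mono) (auto simp: add_nonneg_pos)
    also have "\<dots> = e"
    proof -
      have "cmod c + 1 \<noteq> 0" using norm_ge_zero[of c] by linarith
      then show ?thesis by simp
    qed
    finally show "dist (c * f y) (c * f x) < e" .
  qed
qed

lemma cont_zero: "lcs_continuous_into D P dist (\<lambda>x. 0 :: complex)"
  unfolding lcs_continuous_into_def by (intro ballI allI impI exI[of _ "{}"] exI[of _ 1]) auto

lemma cont_sum:
  fixes n :: nat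
  assumes "\<forall>k. lcs_continuous_into D P dist (\<zeta> k)"
  shows "lcs_continuous_into D P dist (\<lambda>x. \<Sum>k<n. a k * \<zeta> k x :: complex)"
proof (induction n)
  case 0 then show ?case using cont_zero by simp
next
  case (Suc n)
  have "lcs_continuous_into D P dist (\<lambda>x. (\<Sum>k<n. a k * \<zeta> k x) + a n * \<zeta> n x)"
    by (rule cont_add[OF Suc cont_scale]) (use assms in auto)
  then show ?case by simp
qed

lemma bounded_finite:
  assumes "finite S" "\<forall>p\<in>S. bdd_above (p ` M)"
  shows "\<exists>C>0. \<forall>p\<in>S. \<forall>\<eta>\<in>M. p \<eta> \<le> (C::real)"
  using assms
proof (induction S rule: finite_induct)
  case empty then show ?case by (auto intro: exI[of _ 1])
next
  case (insert q S)
  then obtain C where C: "C > 0" "\<forall>p\<in>S. \<forall>\<eta>\<in>M. p \<eta> \<le> C" by auto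
  obtain C' where C': "\<forall>\<eta>\<in>M. q \<eta> \<le> C'" using insert.prems by (auto simp: bdd_above_def)
  have "\<forall>p\<in>insert q S. \<forall>\<eta>\<in>M. p \<eta> \<le> max C C'" using C(2) C' by (auto simp: le_max_iff_disj)
  then show ?case using C(1) by (intro exI[of _ "max C C'"]) auto
qed

lemma CS:
  assumes "summable (\<lambda>k. (cmod (\<zeta> k z))\<^sup>2)" "(\<Sum>k<n. (cmod (a k))\<^sup>2) \<le> 1"
  shows "cmod (\<Sum>k<n. a k * \<zeta> k z) \<le> sqrt (\<Sum>k. (cmod (\<zeta> k z))\<^sup>2)"
proof -
  have "cmod (\<Sum>k<n. a k * \<zeta> k z) \<le> (\<Sum>k<n. \<bar>cmod (a k)\<bar> * \<bar>cmod (\<zeta> k z)\<bar>)"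
    by (rule order_trans[OF norm_sum]) (simp add: norm_mult)
  also have "\<dots> \<le> L2_set (\<lambda>k. cmod (a k)) {..<n} * L2_set (\<lambda>k. cmod (\<zeta> k z)) {..<n}"
    by (rule L2_set_mult_ineq)
  also have "\<dots> \<le> 1 * L2_set (\<lambda>k. cmod (\<zeta> k z)) {..<n}"
    using assms(2) by (intro mult_right_mono) (auto simp: L2_set_def L2_set_nonneg sum_nonneg)
  also have "\<dots> \<le> sqrt (\<Sum>k. (cmod (\<zeta> k z))\<^sup>2)"
    unfolding L2_set_def using assms(1) by (auto intro!: sum_le_suminf)
  finally show ?thesis .
qed

definition Bset :: "(nat \<Rightarrow> 'a \<Rightarrow> complex) \<Rightarrow> ('a \<Rightarrow> complex) set" where
  "Bset \<zeta> = {(\<lambda>x. \<Sum>k<n. a k * \<zeta> k x) | n a. (\<Sum>k<n. (cmod (a k))\<^sup>2) \<le> 1}"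

lemma Bset_bound:
  assumes "summable (\<lambda>k. (cmod (\<zeta> k z))\<^sup>2)" "f \<in> Bset \<zeta>"
  shows "cmod (f z) \<le> sqrt (\<Sum>k. (cmod (\<zeta> k z))\<^sup>2)"
proof -
  obtain n a where "f = (\<lambda>x. \<Sum>k<n. a k * \<zeta> k x)" "(\<Sum>k<n. (cmod (a k))\<^sup>2) \<le> 1"
    using assms(2) unfolding Bset_def by blast
  then show ?thesis using CS[of \<zeta> z, OF assms(1)] by simp
qed

lemma q_upper:
  assumes "summable (\<lambda>k. (cmod (\<zeta> k z))\<^sup>2)" "f \<in> Bset \<zeta>"
  shows "cmod (f z) \<le> sup_over (Bset \<zeta>) (\<lambda>f. cmod (f z))"
  unfolding sup_over_def
proof (rule cSup_upper)
  show "cmod (f z) \<in> insert 0 ((\<lambda>f. cmod (f z)) ` Bset \<zeta>)" using assms by auto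
  show "bdd_above (insert 0 ((\<lambda>f. cmod (f z)) ` Bset \<zeta>))"
    using Bset_bound[of \<zeta> z, OF assms(1)] by (auto intro!: bdd_aboveI[of _ "sqrt (\<Sum>k. (cmod (\<zeta> k z))\<^sup>2)"])
qed

lemma q_nonneg:
  assumes "summable (\<lambda>k. (cmod (\<zeta> k z))\<^sup>2)"
  shows "0 \<le> sup_over (Bset \<zeta>) (\<lambda>f. cmod (f z))"
  unfolding sup_over_def
proof (rule cSup_upper)
  show "bdd_above (insert 0 ((\<lambda>f. cmod (f z)) ` Bset \<zeta>))"
    using Bset_bound[of \<zeta> z, OF assms(1)] by (auto intro!: bdd_aboveI[of _ "sqrt (\<Sum>k. (cmod (\<zeta> k z))\<^sup>2)"])
qed simp

lemma q_lower:
  assumes "summable (\<lambda>k. (cmod (\<zeta> k z))\<^sup>2)"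
  shows "(\<Sum>k. (cmod (\<zeta> k z))\<^sup>2) \<le> (sup_over (Bset \<zeta>) (\<lambda>f. cmod (f z)))\<^sup>2"
proof (rule suminf_le_const[OF assms])
  fix n
  define s where "s = sqrt (\<Sum>k<n. (cmod (\<zeta> k z))\<^sup>2)"
  have s0: "0 \<le> s" unfolding s_def by (simp add: sum_nonneg)
  have ss: "s\<^sup>2 = (\<Sum>k<n. (cmod (\<zeta> k z))\<^sup>2)" unfolding s_def by (simp add: sum_nonneg)
  have "s \<le> sup_over (Bset \<zeta>) (\<lambda>f. cmod (f z))"
  proof (cases "s = 0")
    case True then show ?thesis using q_nonneg[of \<zeta> z, OF assms] by simp
  next
    case False
    define a where "a k = cnj (\<zeta> k z) / of_real s" for k
    have "(\<Sum>k<n. (cmod (a k))\<^sup>2) = (\<Sum>k<n. (cmod (\<zeta> k z))\<^sup>2) / s\<^sup>2"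
      unfolding a_def by (simp add: norm_divide power_divide sum_divide_distrib)
    also have "\<dots> = 1" using False by (simp add: ss[symmetric])
    finally have "(\<lambda>x. \<Sum>k<n. a k * \<zeta> k x) \<in> Bset \<zeta>" unfolding Bset_def by (intro CollectI exI[of _ n] exI[of _ a]) simp
    from q_upper[of \<zeta> z, OF assms this]
    have "cmod (\<Sum>k<n. a k * \<zeta> k z) \<le> sup_over (Bset \<zeta>) (\<lambda>f. cmod (f z))" .
    moreover have "(\<Sum>k<n. a k * \<zeta> k z) = of_real (s\<^sup>2 / s)"
    proof -
      have "(\<Sum>k<n. a k * \<zeta> k z) = (\<Sum>k<n. of_real ((cmod (\<zeta> k z))\<^sup>2) / of_real s)"
        unfolding a_def complex_norm_square by (intro sum.cong refl) (simp add: mult.commute)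
      also have "\<dots> = of_real (s\<^sup>2 / s)" by (simp add: ss sum_divide_distrib)
      finally show ?thesis .
    qed
    moreover have "s\<^sup>2 / s = s" using False by (simp add: power2_eq_square)
    ultimately show ?thesis using s0 by simp
  qed
  then have "s\<^sup>2 \<le> (sup_over (Bset \<zeta>) (\<lambda>f. cmod (f z)))\<^sup>2" using s0 by (intro power_mono) auto
  then show "(\<Sum>k<n. (cmod (\<zeta> k z))\<^sup>2) \<le> (sup_over (Bset \<zeta>) (\<lambda>f. cmod (f z)))\<^sup>2" using ss by simp
qed


theorem proposition2p11:
  fixes sc :: "complex \<Rightarrow> 'a::ab_group_add \<Rightarrow> 'a"
    and ip :: "'a \<Rightarrow> 'a \<Rightarrow> complex"
    and D :: "'a set"
    and P :: "('a \<Rightarrow> real) set"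
    and \<zeta> :: "nat \<Rightarrow> 'a \<Rightarrow> complex"
  assumes "rigged_hilbert_space sc ip D P"
    and "lcs_complete D P"
    and "lcs_reflexive sc D P"
    and "\<forall>k. \<zeta> k \<in> lcs_dual sc D P"
  shows "bessel_like D P \<zeta> \<longleftrightarrow>
         ((\<forall>\<eta>\<in>D. summable (\<lambda>k. (cmod (\<zeta> k \<eta>))\<^sup>2)) \<and>
          lcs_continuous_into D P l2_dist (\<lambda>\<eta> k. cnj (\<zeta> k \<eta>)))"
proof -
  have vs: "vector_space sc" and sub: "module.subspace sc D" and semi: "\<forall>p\<in>P. seminorm_on D sc p"
    using assms(1) unfolding rigged_hilbert_space_def by auto
  have md: "module sc" using vs by (simp add: vector_space_def module_def)
  have D0: "0 \<in> D" using module.subspace_0[OF md sub] .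
  have Dadd: "\<And>x y. x \<in> D \<Longrightarrow> y \<in> D \<Longrightarrow> x + y \<in> D" using module.subspace_add[OF md sub] by blast
  have Ddiff: "\<And>x y. x \<in> D \<Longrightarrow> y \<in> D \<Longrightarrow> x - y \<in> D" using module.subspace_diff[OF md sub] by blast
  have Dsc: "\<And>x c. x \<in> D \<Longrightarrow> sc c x \<in> D" using module.subspace_scale[OF md sub] by blast
  have zadd: "\<And>k x y. x \<in> D \<Longrightarrow> y \<in> D \<Longrightarrow> \<zeta> k (x + y) = \<zeta> k x + \<zeta> k y"
    and zsc: "\<And>k x c. x \<in> D \<Longrightarrow> \<zeta> k (sc c x) = cnj c * \<zeta> k x"
    and zcont: "\<And>k. lcs_continuous_into D P dist (\<zeta> k)"
    and zout: "\<And>k x. x \<notin> D \<Longrightarrow> \<zeta> k x = 0"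
    using assms(4) unfolding lcs_dual_def conj_linear_on_def by auto
  have z0: "\<And>k. \<zeta> k 0 = 0" using zadd[OF D0 D0] by simp
  have zdiff: "\<And>k x y. x \<in> D \<Longrightarrow> y \<in> D \<Longrightarrow> \<zeta> k (y - x) = \<zeta> k y - \<zeta> k x"
  proof -
    fix k x y assume "x \<in> D" "y \<in> D"
    then have "\<zeta> k ((y - x) + x) = \<zeta> k (y - x) + \<zeta> k x" using zadd Ddiff by blast
    then show "\<zeta> k (y - x) = \<zeta> k y - \<zeta> k x" by simp
  qed
  have l2: "l2_dist (\<lambda>k. cnj (\<zeta> k y)) (\<lambda>k. cnj (\<zeta> k x)) = sqrt (\<Sum>k. (cmod (\<zeta> k (y - x)))\<^sup>2)"
    if "x \<in> D" "y \<in> D" for x y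
    unfolding l2_dist_def using zdiff[OF that]
    by (simp flip: complex_cnj_diff)
  show ?thesis
  proof
    assume bl: "bessel_like D P \<zeta>"
    have summ: "\<forall>\<eta>\<in>D. summable (\<lambda>k. (cmod (\<zeta> k \<eta>))\<^sup>2)"
    proof
      fix \<eta> assume "\<eta> \<in> D"
      then have "lcs_bounded D P {\<eta>}" unfolding lcs_bounded_def by auto
      then show "summable (\<lambda>k. (cmod (\<zeta> k \<eta>))\<^sup>2)" using bl unfolding bessel_like_def by blast
    qed
    define q where "q z = sup_over (Bset \<zeta>) (\<lambda>f. cmod (f z))" for z
    have Bform: "\<exists>n a. f = (\<lambda>x. \<Sum>k<n. a k * \<zeta> k x)" if "f \<in> Bset \<zeta>" for f
      using that unfolding Bset_def by blast
    have fadd: "f (x + y) = f x + f y" if fB: "f \<in> Bset \<zeta>" and xy: "x \<in> D" "y \<in> D" for f x y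
    proof -
      obtain n a where fe: "f = (\<lambda>x. \<Sum>k<n. a k * \<zeta> k x)" using Bform[OF fB] by blast
      show ?thesis unfolding fe using zadd[OF xy] by (simp add: distrib_left sum.distrib)
    qed
    have Bdual: "Bset \<zeta> \<subseteq> lcs_dual sc D P"
    proof
      fix f assume f: "f \<in> Bset \<zeta>"
      then obtain n a where fe: "f = (\<lambda>x. \<Sum>k<n. a k * \<zeta> k x)" using Bform by blast
      have "conj_linear_on sc D f"
        unfolding conj_linear_on_def
      proof (intro conjI ballI allI)
        show "f (x + y) = f x + f y" if "x \<in> D" "y \<in> D" for x y using fadd[OF f that] .
        show "f (sc c x) = cnj c * f x" if "x \<in> D" for x c
          unfolding fe using zsc[OF that] by (simp add: sum_distrib_left mult.left_commute)
      qed
      moreover have "lcs_continuous_into D P dist f" unfolding fe by (rule cont_sum) (use zcont in auto)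
      moreover have "\<forall>x. x \<notin> D \<longrightarrow> f x = 0" using zout by (simp add: fe)
      ultimately show "f \<in> lcs_dual sc D P" unfolding lcs_dual_def by (intro CollectI conjI)
    qed
    have Bbdd: "lcs_bounded (lcs_dual sc D P) (strong_seminorms D P) (Bset \<zeta>)"
      unfolding lcs_bounded_def
    proof (intro conjI Bdual ballI)
      fix p assume "p \<in> strong_seminorms D P"
      then obtain M where pM: "p = (\<lambda>f. sup_over M (\<lambda>x. cmod (f x)))" and M: "lcs_bounded D P M"
        unfolding strong_seminorms_def by blast
      obtain Bm where Bm: "\<forall>\<eta>\<in>M. summable (\<lambda>k. (cmod (\<zeta> k \<eta>))\<^sup>2) \<and> (\<Sum>k. (cmod (\<zeta> k \<eta>))\<^sup>2) \<le> Bm"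
        using bl[unfolded bessel_like_def, rule_format, OF M] by (elim exE) (rule that)
      have "p f \<le> max 0 (sqrt Bm)" if f: "f \<in> Bset \<zeta>" for f
        unfolding pM sup_over_def
      proof (rule cSup_least)
        fix v assume "v \<in> insert 0 ((\<lambda>x. cmod (f x)) ` M)"
        then consider "v = 0" | \<eta> where "\<eta> \<in> M" "v = cmod (f \<eta>)" by blast
        then show "v \<le> max 0 (sqrt Bm)"
        proof cases
          case 2
          then have "v \<le> sqrt (\<Sum>k. (cmod (\<zeta> k \<eta>))\<^sup>2)" using Bset_bound[of \<zeta> \<eta> f] Bm f by auto
          also have "\<dots> \<le> sqrt Bm" using Bm 2 by auto
          finally show ?thesis by linarith
        qed simp
      qed simp
      then show "bdd_above (p ` Bset \<zeta>)" by (auto intro!: bdd_aboveI)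
    qed
    have qbid: "q \<in> bidual_seminorms sc D P"
      unfolding bidual_seminorms_def q_def[abs_def] using Bbdd by blast
    have q0: "0 \<le> q z" if "z \<in> D" for z using q_nonneg[of \<zeta> z] summ that by (simp add: q_def)
    have qlow: "(\<Sum>k. (cmod (\<zeta> k z))\<^sup>2) \<le> (q z)\<^sup>2" if "z \<in> D" for z
      using q_lower[of \<zeta> z] summ that by (simp add: q_def)
    have qup: "cmod (f z) \<le> q z" if "z \<in> D" "f \<in> Bset \<zeta>" for z f
      using q_upper[of \<zeta> z f] summ that by (simp add: q_def)
    have qsub: "q (a + b) \<le> q a + q b" if "a \<in> D" "b \<in> D" for a b
      unfolding q_def[of "a+b"] sup_over_def
    proof (rule cSup_least)
      fix v assume "v \<in> insert 0 ((\<lambda>f. cmod (f (a + b))) ` Bset \<zeta>)"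
      then consider "v = 0" | f where "f \<in> Bset \<zeta>" "v = cmod (f (a + b))" by blast
      then show "v \<le> q a + q b"
      proof cases
        case 1 then show ?thesis using q0 that by (simp add: add_nonneg_nonneg)
      next
        case 2
        then have "v = cmod (f a + f b)" using fadd that by simp
        also have "\<dots> \<le> cmod (f a) + cmod (f b)" by (rule norm_triangle_ineq)
        also have "\<dots> \<le> q a + q b" using qup 2 that by (simp add: add_mono)
        finally show ?thesis .
      qed
    qed simp
    have qzero: "q 0 = 0"
    proof -
      have "q 0 \<le> 0" unfolding q_def sup_over_def
      proof (rule cSup_least)
        fix v assume "v \<in> insert 0 ((\<lambda>f. cmod (f 0)) ` Bset \<zeta>)"
        have fz: "f 0 = 0" if fB: "f \<in> Bset \<zeta>" for f
        proof -
          obtain n a where fe: "f = (\<lambda>x. \<Sum>k<n. a k * \<zeta> k x)" using Bform[OF fB] by blast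
          show ?thesis unfolding fe by (simp add: z0)
        qed
        then show "v \<le> 0" using \<open>v \<in> _\<close> by auto
      qed simp
      then show ?thesis using q0[OF D0] by simp
    qed
    have cont: "lcs_continuous_into D P l2_dist (\<lambda>\<eta> k. cnj (\<zeta> k \<eta>))"
      unfolding lcs_continuous_into_def
    proof (intro ballI allI impI)
      fix x e assume x: "x \<in> D" and e: "(0::real) < e"
      define U where "U = {y\<in>D. q (y - x) < e}"
      have "lcs_open D (bidual_seminorms sc D P) U"
        unfolding lcs_open_def
      proof (intro conjI ballI)
        show "U \<subseteq> D" unfolding U_def by auto
        fix y0 assume y0: "y0 \<in> U"
        show "\<exists>S \<delta>. finite S \<and> S \<subseteq> bidual_seminorms sc D P \<and> 0 < \<delta> \<and> {y \<in> D. \<forall>p\<in>S. p (y - y0) < \<delta>} \<subseteq> U"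
        proof (intro exI conjI)
          show "finite {q}" "{q} \<subseteq> bidual_seminorms sc D P" using qbid by auto
          show "0 < e - q (y0 - x)" using y0 unfolding U_def by auto
          show "{y \<in> D. \<forall>p\<in>{q}. p (y - y0) < e - q (y0 - x)} \<subseteq> U"
          proof
            fix y assume y: "y \<in> {y \<in> D. \<forall>p\<in>{q}. p (y - y0) < e - q (y0 - x)}"
            have yD: "y \<in> D" and y0D: "y0 \<in> D" using y y0 unfolding U_def by auto
            have "q (y - x) = q ((y - y0) + (y0 - x))" by simp
            also have "\<dots> \<le> q (y - y0) + q (y0 - x)" using qsub Ddiff yD y0D x by blast
            also have "\<dots> < e" using y by auto
            finally show "y \<in> U" using yD unfolding U_def by auto
          qed
        qed
      qed
      then have "lcs_open D P U" using assms(3) unfolding lcs_reflexive_def by blast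
      moreover have "x \<in> U" using x e qzero unfolding U_def by simp
      ultimately obtain S \<delta> where S: "finite S" "S \<subseteq> P" "0 < \<delta>" "{y\<in>D. \<forall>p\<in>S. p (y - x) < \<delta>} \<subseteq> U"
        unfolding lcs_open_def by blast
      show "\<exists>S \<delta>. finite S \<and> S \<subseteq> P \<and> 0 < \<delta> \<and> (\<forall>y\<in>D. (\<forall>p\<in>S. p (y - x) < \<delta>) \<longrightarrow> l2_dist (\<lambda>k. cnj (\<zeta> k y)) (\<lambda>k. cnj (\<zeta> k x)) < e)"
      proof (intro exI conjI ballI impI)
        show "finite S" "S \<subseteq> P" "0 < \<delta>" using S by auto
        fix y assume y: "y \<in> D" "\<forall>p\<in>S. p (y - x) < \<delta>"
        then have "y \<in> U" using S(4) by blast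
        then have qy: "q (y - x) < e" unfolding U_def by auto
        have yx: "y - x \<in> D" using Ddiff y x by blast
        have "l2_dist (\<lambda>k. cnj (\<zeta> k y)) (\<lambda>k. cnj (\<zeta> k x)) = sqrt (\<Sum>k. (cmod (\<zeta> k (y - x)))\<^sup>2)"
          using l2 x y by blast
        also have "\<dots> \<le> sqrt ((q (y - x))\<^sup>2)" using qlow[OF yx] real_sqrt_le_mono by blast
        also have "\<dots> = q (y - x)" using q0[OF yx] by simp
        finally show "l2_dist (\<lambda>k. cnj (\<zeta> k y)) (\<lambda>k. cnj (\<zeta> k x)) < e" using qy by linarith
      qed
    qed
    show "(\<forall>\<eta>\<in>D. summable (\<lambda>k. (cmod (\<zeta> k \<eta>))\<^sup>2)) \<and> lcs_continuous_into D P l2_dist (\<lambda>\<eta> k. cnj (\<zeta> k \<eta>))"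
      using summ cont by blast
  next
    assume rhs: "(\<forall>\<eta>\<in>D. summable (\<lambda>k. (cmod (\<zeta> k \<eta>))\<^sup>2)) \<and> lcs_continuous_into D P l2_dist (\<lambda>\<eta> k. cnj (\<zeta> k \<eta>))"
    then have summ: "\<forall>\<eta>\<in>D. summable (\<lambda>k. (cmod (\<zeta> k \<eta>))\<^sup>2)"
      and cont: "lcs_continuous_into D P l2_dist (\<lambda>\<eta> k. cnj (\<zeta> k \<eta>))" by auto
    obtain S \<delta> where S: "finite S" "S \<subseteq> P" "0 < \<delta>"
      "\<forall>y\<in>D. (\<forall>p\<in>S. p (y - 0) < \<delta>) \<longrightarrow> l2_dist (\<lambda>k. cnj (\<zeta> k y)) (\<lambda>k. cnj (\<zeta> k 0)) < 1"
      using cont[unfolded lcs_continuous_into_def, rule_format, OF D0 zero_less_one] by (elim exE conjE) (rule that)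
    show "bessel_like D P \<zeta>"
      unfolding bessel_like_def
    proof (intro allI impI)
      fix M assume M: "lcs_bounded D P M"
      then have MD: "M \<subseteq> D" and Mb: "\<forall>p\<in>S. bdd_above (p ` M)" using S(2) unfolding lcs_bounded_def by auto
      obtain C where C: "C > 0" "\<forall>p\<in>S. \<forall>\<eta>\<in>M. p \<eta> \<le> C" using bounded_finite[OF S(1) Mb] by blast
      define t where "t = \<delta> / (2 * C)"
      have t: "0 < t" unfolding t_def using C S(3) by simp
      have "(\<Sum>k. (cmod (\<zeta> k \<eta>))\<^sup>2) \<le> 1 / t\<^sup>2" if \<eta>: "\<eta> \<in> M" for \<eta>
      proof -
        have \<eta>D: "\<eta> \<in> D" using \<eta> MD by auto
        define y where "y = sc (of_real t) \<eta>"
        have yD: "y \<in> D" unfolding y_def using Dsc \<eta>D by blast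
        have "p (y - 0) < \<delta>" if p: "p \<in> S" for p
        proof -
          have "p y = cmod (of_real t) * p \<eta>" using semi S(2) p \<eta>D unfolding y_def seminorm_on_def by blast
          also have "\<dots> = t * p \<eta>" using t by simp
          also have "\<dots> \<le> t * C" using C p \<eta> t by (simp add: mult_left_mono)
          also have "\<dots> = \<delta> / 2" unfolding t_def using C by simp
          finally show ?thesis using S(3) by simp
        qed
        then have "l2_dist (\<lambda>k. cnj (\<zeta> k y)) (\<lambda>k. cnj (\<zeta> k 0)) < 1" using S(4) yD by blast
        also have "l2_dist (\<lambda>k. cnj (\<zeta> k y)) (\<lambda>k. cnj (\<zeta> k 0)) = sqrt (\<Sum>k. t\<^sup>2 * (cmod (\<zeta> k \<eta>))\<^sup>2)"
          unfolding l2_dist_def y_def using zsc[OF \<eta>D] z0 t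
          by (simp add: norm_mult power_mult_distrib)
        also have "(\<Sum>k. t\<^sup>2 * (cmod (\<zeta> k \<eta>))\<^sup>2) = t\<^sup>2 * (\<Sum>k. (cmod (\<zeta> k \<eta>))\<^sup>2)"
          using summ \<eta>D by (simp add: suminf_mult)
        finally have "t\<^sup>2 * (\<Sum>k. (cmod (\<zeta> k \<eta>))\<^sup>2) < 1" by (simp add: real_sqrt_lt_1_iff)
        then show ?thesis using t by (simp add: field_simps)
      qed
      then show "\<exists>B. \<forall>\<eta>\<in>M. summable (\<lambda>k. (cmod (\<zeta> k \<eta>))\<^sup>2) \<and> (\<Sum>k. (cmod (\<zeta> k \<eta>))\<^sup>2) \<le> B"
        using summ MD by blast
    qed
  qed
qed

end
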